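(* Let $R$ be a $\star$-ring. The following are equivalent: (1) $R$ is weakly $\star$-clean and $2\in U(R)$; (2) every element $a\in R$ can be written either as $a=u+x$ with $u\in U(R)$ and $x^2=1$, $x^\star=x$, or as $a=u+(2p+1)$ with $u\in U(R)$ and $p^2=p=p^\star$.
   Context: Rings are associative with identity. A $\star$-ring is a ring with a map $\star:R\to R$ satisfying $(x+y)^\star=x^\star+y^\star$, $(xy)^\star=y^\star x^\star$, $(x^\star)^\star=x$. A projection is $p$ with $p^2=p=p^\star$; $P(R)$ is the set of projections and $U(R)$ the units. An element $x$ is weakly $\star$-clean if $x=u+p$ or $x=u-p$ with $u\in U(R)$, $p\in P(R)$; $R$ is weakly $\star$-clean if all its elements are. *)

theory Defs
  imports Main
begin

definition star_ring :: "('a::ring_1 \<Rightarrow> 'a) \<Rightarrow> bool" where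
  "star_ring st \<longleftrightarrow>
     (\<forall>x y. st (x + y) = st x + st y) \<and>
     (\<forall>x y. st (x * y) = st y * st x) \<and>
     (\<forall>x. st (st x) = x)"

definition units :: "'a::ring_1 set" where
  "units = {u. \<exists>v. u * v = 1 \<and> v * u = 1}"

definition projections :: "('a::ring_1 \<Rightarrow> 'a) \<Rightarrow> 'a set" where
  "projections st = {p. p * p = p \<and> st p = p}"

definition weakly_star_clean_elem :: "('a::ring_1 \<Rightarrow> 'a) \<Rightarrow> 'a \<Rightarrow> bool" where
  "weakly_star_clean_elem st x \<longleftrightarrow>
     (\<exists>u\<in>units. \<exists>p\<in>projections st. x = u + p \<or> x = u - p)"

definition weakly_star_clean :: "('a::ring_1 \<Rightarrow> 'a) \<Rightarrow> bool" where
  "weakly_star_clean st \<longleftrightarrow> (\<forall>x. weakly_star_clean_elem st x)"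

end

theory Submission
  imports Defs
begin

lemma units_mult: "(a::'a::ring_1) \<in> units \<Longrightarrow> b \<in> units \<Longrightarrow> a * b \<in> units"
proof -
  assume "a \<in> units" "b \<in> units"
  then obtain va vb where a: "a * va = 1" "va * a = 1" and b: "b * vb = 1" "vb * b = 1"
    unfolding units_def by blast
  have "(a * b) * (vb * va) = a * (b * vb) * va" by (simp add: mult.assoc)
  moreover have "(vb * va) * (a * b) = vb * (va * a) * b" by (simp add: mult.assoc)
  ultimately show ?thesis using a b unfolding units_def by auto
qed

lemma units_neg: "(a::'a::ring_1) \<in> units \<Longrightarrow> - a \<in> units"
proof -
  assume "a \<in> units"
  then obtain v where "a * v = 1" "v * a = 1" unfolding units_def by blast
  then have "(- a) * (- v) = 1" "(- v) * (- a) = 1" by simp_all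
  then show ?thesis unfolding units_def by blast
qed

lemma two_central: "2 * (x::'a::ring_1) = x * 2"
  by (simp add: mult_2 mult_2_right)

lemma inv2_central:
  assumes "2 * h = (1::'a::ring_1)" "h * 2 = 1"
  shows "h * x = x * h"
proof -
  have "h * x = h * x * (2 * h)" using assms by simp
  also have "\<dots> = h * (x * 2) * h" by (simp add: mult.assoc)
  also have "\<dots> = h * (2 * x) * h" by (simp only: two_central)
  also have "\<dots> = (h * 2) * x * h" by (simp add: mult.assoc)
  finally show ?thesis using assms by simp
qed

lemma star_basic:
  assumes "star_ring st"
  shows "st 0 = 0" "st (- x) = - st x" "st (x - y) = st x - st y" "st 1 = 1"
    "st (x + y) = st x + st y" "st (x * y) = st y * st x" "st (st x) = x" "st 2 = 2"
proof -
  have add: "\<And>x y. st (x + y) = st x + st y" and mul: "\<And>x y. st (x * y) = st y * st x"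
    and inv: "\<And>x. st (st x) = x" using assms unfolding star_ring_def by auto
  show z: "st 0 = 0" using add[of 0 0] by simp
  have n: "\<And>x. st (- x) = - st x"
  proof -
    fix x
    have "st x + st (- x) = 0" using add[of x "-x"] z by simp
    then show "st (- x) = - st x" by (rule minus_unique[symmetric])
  qed
  show "st (- x) = - st x" by (rule n)
  show "st (x - y) = st x - st y" using add[of x "-y"] n[of y] by simp
  have o: "st 1 = 1"
  proof -
    have "st 1 = st 1 * st (st 1)" using inv by simp
    also have "\<dots> = st (st 1 * 1)" by (rule mul[of "st 1" 1, symmetric])
    finally show ?thesis using inv by simp
  qed
  show "st 1 = 1" by (rule o)
  show "st (x + y) = st x + st y" "st (x * y) = st y * st x" "st (st x) = x" using add mul inv by auto
  show "st 2 = 2" using add[of 1 1] o by (simp add: one_add_one[symmetric] del: one_add_one)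
qed

theorem theorem4p7:
  fixes st :: "'a::ring_1 \<Rightarrow> 'a"
  assumes "star_ring st"
  shows "(weakly_star_clean st \<and> (2::'a) \<in> units) \<longleftrightarrow>
         (\<forall>a::'a. (\<exists>u\<in>units. \<exists>x. x * x = 1 \<and> st x = x \<and> a = u + x) \<or>
                  (\<exists>u\<in>units. \<exists>p. p * p = p \<and> st p = p \<and> a = u + (2 * p + 1)))"
proof
  note S = star_basic[OF assms]
  assume H: "weakly_star_clean st \<and> (2::'a) \<in> units"
  then obtain h :: 'a where h: "2 * h = 1" "h * 2 = 1" unfolding units_def by blast
  have two: "(2::'a) \<in> units" using H by simp
  show "\<forall>a::'a. (\<exists>u\<in>units. \<exists>x. x * x = 1 \<and> st x = x \<and> a = u + x) \<or>
                  (\<exists>u\<in>units. \<exists>p. p * p = p \<and> st p = p \<and> a = u + (2 * p + 1))"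
  proof
    fix a :: 'a
    define b where "b = h * (a - 1)"
    have ab: "a = 2 * b + 1" unfolding b_def using h by (simp add: mult.assoc[symmetric])
    obtain u p where u: "u \<in> units" and p: "p * p = p" "st p = p" and c: "b = u + p \<or> b = u - p"
      using H unfolding weakly_star_clean_def weakly_star_clean_elem_def projections_def by blast
    have u2: "2 * u \<in> units" using units_mult[OF two u] .
    show "(\<exists>u\<in>units. \<exists>x. x * x = 1 \<and> st x = x \<and> a = u + x) \<or>
                  (\<exists>u\<in>units. \<exists>p. p * p = p \<and> st p = p \<and> a = u + (2 * p + 1))"
    proof (cases "b = u + p")
      case True
      then have "a = 2 * u + (2 * p + 1)" using ab by (simp add: distrib_left add.assoc)
      then show ?thesis using u2 p by blast
    next
      case False
      then have bb: "b = u - p" using c by blast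
      define x where "x = 1 - 2 * p"
      have "a = 2 * u + x" using ab bb unfolding x_def by (simp add: algebra_simps)
      moreover have "x * x = 1" unfolding x_def using p
        by (simp add: algebra_simps mult_2 mult_2_right)
      moreover have "st x = x" unfolding x_def using p S
        by (simp add: mult_2)
      ultimately show ?thesis using u2 by blast
    qed
  qed
next
  note S = star_basic[OF assms]
  assume H: "\<forall>a::'a. (\<exists>u\<in>units. \<exists>x. x * x = 1 \<and> st x = x \<and> a = u + x) \<or>
                  (\<exists>u\<in>units. \<exists>p. p * p = p \<and> st p = p \<and> a = u + (2 * p + 1))"
  have two: "(2::'a) \<in> units"
  proof -
    from H[rule_format, of 1] show ?thesis
    proof
      assume "\<exists>u\<in>units. \<exists>x. x * x = 1 \<and> st x = x \<and> (1::'a) = u + x"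
      then obtain u x where u: "u \<in> units" and x: "x * x = 1" "(1::'a) = u + x" by blast
      obtain v where v: "v * u = 1" using u unfolding units_def by blast
      have ux: "u = 1 - x" using x(2) by (simp add: algebra_simps)
      have "u * (1 + x) = 1 + x - x - x * x" unfolding ux by (simp add: algebra_simps)
      then have "u * (1 + x) = 0" using x(1) by simp
      then have "v * u * (1 + x) = 0" by (simp add: mult.assoc)
      then have "x = -1" using v by (simp add: eq_neg_iff_add_eq_0 add.commute)
      then have "u = 2" using x by (simp add: algebra_simps)
      then show ?thesis using u by simp
    next
      assume "\<exists>u\<in>units. \<exists>p. p * p = p \<and> st p = p \<and> (1::'a) = u + (2 * p + 1)"
      then obtain u p where u: "u \<in> units" and p: "p * p = p" "(1::'a) = u + (2 * p + 1)" by blast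
      have up: "u = - (2 * p)" using p by (simp add: eq_neg_iff_add_eq_0 add.commute)
      obtain v where v: "u * v = 1" "v * u = 1" using u unfolding units_def by blast
      have "p * (- (2 * v)) = 1" using v up
        by (metis minus_mult_commute mult.assoc two_central)
      moreover have "(- (2 * v)) * p = 1" using v up
        by (metis minus_mult_commute mult.assoc two_central mult_minus_right)
      ultimately have "p = 1" using p
        by (metis mult.assoc mult_1_left mult_1_right)
      then have "- u = 2" using up by simp
      then show ?thesis using units_neg[OF u] by simp
    qed
  qed
  obtain h :: 'a where h: "2 * h = 1" "h * 2 = 1" using two unfolding units_def by blast
  have hu: "h \<in> units" using h unfolding units_def by blast
  have sth: "st h = h"
  proof -
    have "st h * 2 = 1" using arg_cong[OF h(1), of st] S by simp
    then have "st h * 2 * h = h" by simp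
    then show ?thesis using h(1) by (simp add: mult.assoc)
  qed
  have "weakly_star_clean st"
    unfolding weakly_star_clean_def weakly_star_clean_elem_def projections_def
  proof
    fix x :: 'a
    have xe: "x = h * (2 * x + 1 - 1)" using h by (simp add: mult.assoc[symmetric])
    from H[rule_format, of "2 * x + 1"] show "\<exists>u\<in>units. \<exists>p\<in>{p. p * p = p \<and> st p = p}. x = u + p \<or> x = u - p"
    proof
      assume "\<exists>u\<in>units. \<exists>y. y * y = 1 \<and> st y = y \<and> 2 * x + 1 = u + y"
      then obtain u y where u: "u \<in> units" and y: "y * y = 1" "st y = y" "2 * x + 1 = u + y" by blast
      define q where "q = h * (1 - y)"
      have tx: "2 * x = u - (1 - y)" using y(3) by (simp add: algebra_simps)
      have "x = h * (2 * x)" using h by (simp add: mult.assoc[symmetric])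
      also have "\<dots> = h * u - q" unfolding tx q_def by (simp add: right_diff_distrib)
      finally have "x = h * u - q" .
      moreover have "q * q = q"
      proof -
        have "q * q = h * h * ((1 - y) * (1 - y))" unfolding q_def
          using inv2_central[OF h] by (metis mult.assoc)
        also have "(1 - y) * (1 - y) = 2 * (1 - y)" using y(1) by (simp add: algebra_simps mult_2)
        also have "h * h * (2 * (1 - y)) = h * (h * 2) * (1 - y)" by (simp add: mult.assoc)
        finally show ?thesis using h unfolding q_def by simp
      qed
      moreover have "st q = q" unfolding q_def using S y sth inv2_central[OF h] by simp
      ultimately show ?thesis using units_mult[OF hu u] by blast
    next
      assume "\<exists>u\<in>units. \<exists>p. p * p = p \<and> st p = p \<and> 2 * x + 1 = u + (2 * p + 1)"
      then obtain u p where u: "u \<in> units" and p: "p * p = p" "st p = p" "2 * x + 1 = u + (2 * p + 1)" by blast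
      have tx: "2 * x = u + 2 * p" using p(3) by (simp add: algebra_simps)
      have "x = h * (2 * x)" using h by (simp add: mult.assoc[symmetric])
      also have "\<dots> = h * u + (h * 2) * p" unfolding tx by (simp add: distrib_left mult.assoc)
      finally have "x = h * u + p" using h by simp
      then show ?thesis using units_mult[OF hu u] p by blast
    qed
  qed
  then show "weakly_star_clean st \<and> (2::'a) \<in> units" using two by simp
qed

end
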